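(* There exists a two-way optical interference automaton (2OIA) that recognizes the language $L_{bal}=\{w\in\{(,)\}^*\mid \text{the parentheses in } w \text{ are balanced}\}$ in $O(n^3)$ time, where $n$ is the input length.
   Context: A two-way optical interference automaton (2OIA) is a deterministic machine with finite state set $Q$, start state $q_0$, accepting and rejecting states, finite input alphabet $\Sigma$, and tape alphabet $\Gamma=\Sigma\cup\{\text{¢},\$\}$. On input $w=w_1\cdots w_n$ the read-only tape holds ¢$w_1\cdots w_n\$$ in cells $0,1,\dots,n+1$, scanned by a two-way head. For each cell $m$ there is a monochromatic point light source at the point $(m,0)$ of the plane; all sources have the same wavelength $\lambda$ and the same initial amplitude $A_0$, and each source is at any moment either switched off or switched on with initial phase $0$ or $\pi$. A detector is located at a grid point $(j,k)$ with $j,k\in\{0,\tfrac12,1,\tfrac32,\dots,n+1\}$, pointing towards the source array; its field of vision is the cone making angle $\pi/4$ with the vertical line through it, so it sees exactly the sources at $(m,0)$ with $|m-j|\le k$. The resultant wave at the detector is $\sum A_0 r_m^{-1}e^{i(\phi_m+2\pi r_m/\lambda)}$, summed over the switched-on sources it sees, where $r_m$ is the distance from the source to the detector and $\phi_m\in\{0,\pi\}$ the source's phase; the detector outputs $\underline{1}$ if this resultant is nonzero and $\underline{0}$ otherwise. The transition function $\delta:Q\times\Gamma\times\{\underline0,\underline1\}\to Q\times\{\text{left},\text{right},\text{stay}\}\times\{\text{left},\text{right},\text{up},\text{down},\text{stay}\}\times\{\mathrm{toggle}(0),\mathrm{toggle}(\pi),-\}$ maps (state, scanned symbol, detector output) to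 a new state, a move of the head by one cell, a move of the detector by one grid step (of length $1/2$), and an action on the source of the currently scanned cell: $\mathrm{toggle}(\phi)$ switches it on with phase $\phi$ if it is off and switches it off if it is on; $-$ does nothing. Initially all sources are off, the machine is in $q_0$, the head is on cell $0$, and the detector is at a prescribed initial grid position. For a given source, a maximal sequence of toggles at consecutive time steps is called non-transient if its length is odd; there is a constant $k$ such that the machine crashes if it attempts a non-transient toggle sequence on a single source for the $(k+1)$-th time. The machine accepts when it is in an accepting state with detector output $\underline0$. Its running time is the total number of moves made by the head plus the number of moves made by the detector. A 2OIA recognizes a language $L$ if it accepts every input in $L$ and rejects every input not in $L$. *)

theory Defs
  imports Complex_Main
begin

datatype paren = LP | RP

datatype 'a tsym = LEnd | REnd | Sym 'a

datatype hmove = HLeft | HRight | HStay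
datatype dmove = DLeft | DRight | DUp | DDown | DStay
datatype act = Toggle0 | TogglePi | NoAct
datatype src = Off | On0 | OnPi

text \<open>The detector position is stored in half-units: a pair (J,K) of naturals stands
  for the grid point (J/2, K/2).  \<open>kbound\<close> is the constant k bounding the number
  of non-transient toggle sequences per source.\<close>
record 'a oia =
  states :: "nat set"
  start :: nat
  accs :: "nat set"
  rejs :: "nat set"
  trans :: "nat \<Rightarrow> 'a tsym \<Rightarrow> bool \<Rightarrow> nat \<times> hmove \<times> dmove \<times> act"
  wavelength :: real
  amp :: real
  det0 :: "nat \<times> nat"
  kbound :: nat

definition wf_oia :: "'a oia \<Rightarrow> bool" where
  "wf_oia M \<longleftrightarrow> finite (states M) \<and> start M \<in> states M \<and>
     accs M \<subseteq> states M \<and> rejs M \<subseteq> states M \<and> accs M \<inter> rejs M = {} \<and>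
     (\<forall>q\<in>states M. \<forall>s b. fst (trans M q s b) \<in> states M) \<and>
     wavelength M > 0 \<and> amp M > 0"

record config =
  cstate :: nat
  chead :: nat
  cdet :: "nat \<times> nat"
  csrc :: "nat \<Rightarrow> src"

text \<open>Tape contents on input w: cell 0 is the left endmarker, cells 1..n the input,
  cell n+1 the right endmarker.\<close>
definition tape :: "'a list \<Rightarrow> nat \<Rightarrow> 'a tsym" where
  "tape w i = (if i = 0 then LEnd else if i \<le> length w then Sym (w ! (i - 1)) else REnd)"

fun phase :: "src \<Rightarrow> real" where
  "phase Off = 0" | "phase On0 = 0" | "phase OnPi = pi"

text \<open>Sources seen by a detector at (J/2, K/2): those at (m,0), 0 \<le> m \<le> n+1, with |m - J/2| \<le> K/2.\<close>
definition visible :: "nat \<Rightarrow> nat \<times> nat \<Rightarrow> nat set" where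
  "visible n d = {m. m \<le> n + 1 \<and> \<bar>real m - real (fst d) / 2\<bar> \<le> real (snd d) / 2}"

definition srcdist :: "nat \<times> nat \<Rightarrow> nat \<Rightarrow> real" where
  "srcdist d m = sqrt ((real m - real (fst d) / 2)\<^sup>2 + (real (snd d) / 2)\<^sup>2)"

definition resultant :: "'a oia \<Rightarrow> nat \<Rightarrow> nat \<times> nat \<Rightarrow> (nat \<Rightarrow> src) \<Rightarrow> complex" where
  "resultant M n d S =
     (\<Sum>m\<in>{m\<in>visible n d. S m \<noteq> Off}.
        of_real (amp M / srcdist d m) * cis (phase (S m) + 2 * pi * srcdist d m / wavelength M))"

text \<open>Detector output (True = 1).  A switched-on source located exactly at the detector
  (distance 0, infinite amplitude) is regarded as giving output 1.\<close>
definition det_output :: "'a oia \<Rightarrow> nat \<Rightarrow> config \<Rightarrow> bool" where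
  "det_output M n c \<longleftrightarrow>
     (\<exists>m\<in>visible n (cdet c). csrc c m \<noteq> Off \<and> srcdist (cdet c) m = 0) \<or>
     resultant M n (cdet c) (csrc c) \<noteq> 0"

fun toggle :: "act \<Rightarrow> src \<Rightarrow> src" where
  "toggle NoAct s = s"
| "toggle Toggle0 s = (if s = Off then On0 else Off)"
| "toggle TogglePi s = (if s = Off then OnPi else Off)"

text \<open>Head moves; leaving cells 0..n+1 is a crash (None).\<close>
fun move_head :: "nat \<Rightarrow> nat \<Rightarrow> hmove \<Rightarrow> nat option" where
  "move_head n h HStay = Some h"
| "move_head n h HLeft = (if h = 0 then None else Some (h - 1))"
| "move_head n h HRight = (if h \<ge> n + 1 then None else Some (h + 1))"

text \<open>Detector moves by half a unit; leaving the grid {0,1/2,...,n+1}^2 is a crash (None).\<close>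
fun move_det :: "nat \<Rightarrow> nat \<times> nat \<Rightarrow> dmove \<Rightarrow> (nat \<times> nat) option" where
  "move_det n (J, K) DStay = Some (J, K)"
| "move_det n (J, K) DLeft = (if J = 0 then None else Some (J - 1, K))"
| "move_det n (J, K) DRight = (if J \<ge> 2 * (n + 1) then None else Some (J + 1, K))"
| "move_det n (J, K) DDown = (if K = 0 then None else Some (J, K - 1))"
| "move_det n (J, K) DUp = (if K \<ge> 2 * (n + 1) then None else Some (J, K + 1))"

definition cur_trans :: "'a oia \<Rightarrow> 'a list \<Rightarrow> config \<Rightarrow> nat \<times> hmove \<times> dmove \<times> act" where
  "cur_trans M w c = trans M (cstate c) (tape w (chead c)) (det_output M (length w) c)"

definition step :: "'a oia \<Rightarrow> 'a list \<Rightarrow> config \<Rightarrow> config option" where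
  "step M w c =
     (case cur_trans M w c of (q', hm, dm, a) \<Rightarrow>
       (case move_head (length w) (chead c) hm of
          None \<Rightarrow> None
        | Some h' \<Rightarrow>
          (case move_det (length w) (cdet c) dm of
             None \<Rightarrow> None
           | Some d' \<Rightarrow> Some \<lparr>cstate = q', chead = h', cdet = d',
                  csrc = (csrc c)(chead c := toggle a (csrc c (chead c)))\<rparr>)))"

definition init_conf :: "'a oia \<Rightarrow> 'a list \<Rightarrow> config option" where
  "init_conf M w =
     (if fst (det0 M) \<le> 2 * (length w + 1) \<and> snd (det0 M) \<le> 2 * (length w + 1)
      then Some \<lparr>cstate = start M, chead = 0, cdet = det0 M, csrc = (\<lambda>_. Off)\<rparr>
      else None)"

text \<open>Configuration after t steps (None = crashed).\<close>
primrec run :: "'a oia \<Rightarrow> 'a list \<Rightarrow> nat \<Rightarrow> config option" where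
  "run M w 0 = init_conf M w"
| "run M w (Suc t) = Option.bind (run M w t) (step M w)"

definition halting :: "'a oia \<Rightarrow> config \<Rightarrow> bool" where
  "halting M c \<longleftrightarrow> cstate c \<in> accs M \<union> rejs M"

definition halts_at :: "'a oia \<Rightarrow> 'a list \<Rightarrow> nat \<Rightarrow> bool" where
  "halts_at M w T \<longleftrightarrow>
     (\<exists>c. run M w T = Some c \<and> halting M c) \<and>
     (\<forall>t<T. \<exists>c. run M w t = Some c \<and> \<not> halting M c)"

definition moves_at :: "'a oia \<Rightarrow> 'a list \<Rightarrow> nat \<Rightarrow> nat" where
  "moves_at M w t =
     (case run M w t of None \<Rightarrow> 0
      | Some c \<Rightarrow> (case cur_trans M w c of (q', hm, dm, a) \<Rightarrow>
           (if hm = HStay then 0 else 1) + (if dm = DStay then 0 else 1)))"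

definition toggled :: "'a oia \<Rightarrow> 'a list \<Rightarrow> nat \<Rightarrow> nat \<Rightarrow> nat \<Rightarrow> bool" where
  "toggled M w T m t \<longleftrightarrow> t < T \<and>
     (\<exists>c. run M w t = Some c \<and> chead c = m \<and> snd (snd (snd (cur_trans M w c))) \<noteq> NoAct)"

text \<open>Start times of the non-transient (odd-length) maximal sequences of toggles at
  consecutive time steps on source m, during the first T steps.\<close>
definition nontransient_starts :: "'a oia \<Rightarrow> 'a list \<Rightarrow> nat \<Rightarrow> nat \<Rightarrow> nat set" where
  "nontransient_starts M w T m =
     {s. toggled M w T m s \<and> (s = 0 \<or> \<not> toggled M w T m (s - 1)) \<and>
         odd ((LEAST e. s < e \<and> \<not> toggled M w T m e) - s)}"

text \<open>No crash due to the toggle restriction during the first T steps.\<close>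
definition toggles_ok :: "'a oia \<Rightarrow> 'a list \<Rightarrow> nat \<Rightarrow> bool" where
  "toggles_ok M w T \<longleftrightarrow> (\<forall>m. card (nontransient_starts M w T m) \<le> kbound M)"

definition accepting_conf :: "'a oia \<Rightarrow> 'a list \<Rightarrow> config \<Rightarrow> bool" where
  "accepting_conf M w c \<longleftrightarrow> cstate c \<in> accs M \<and> \<not> det_output M (length w) c"

definition recognizes_in_time :: "'a oia \<Rightarrow> 'a list set \<Rightarrow> (nat \<Rightarrow> real) \<Rightarrow> bool" where
  "recognizes_in_time M L f \<longleftrightarrow>
     (\<forall>w. \<exists>T c. halts_at M w T \<and> run M w T = Some c \<and> toggles_ok M w T \<and>
        (w \<in> L \<longleftrightarrow> accepting_conf M w c) \<and>
        real (\<Sum>t<T. moves_at M w t) \<le> f (length w))"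

inductive balanced :: "paren list \<Rightarrow> bool" where
  bal_nil: "balanced []"
| bal_wrap: "balanced w \<Longrightarrow> balanced (LP # w @ [RP])"
| bal_app: "balanced u \<Longrightarrow> balanced v \<Longrightarrow> balanced (u @ v)"

definition L_bal :: "paren list set" where
  "L_bal = {w. balanced w}"

end

theory Submission
  imports Defs
begin


fun chk :: "paren list \<Rightarrow> nat \<Rightarrow> nat option" where
  "chk [] d = Some d"
| "chk (LP # w) d = chk w (Suc d)"
| "chk (RP # w) d = (if d = 0 then None else chk w (d - 1))"

lemma chk_append: "chk (u @ v) d = (case chk u d of None \<Rightarrow> None | Some d' \<Rightarrow> chk v d')"
proof (induction u arbitrary: d)
  case Nil then show ?case by simp
next
  case (Cons a u) then show ?case by (cases a) auto
qed

lemma chk_bound: "chk u d = Some d' \<Longrightarrow> d' \<le> d + length u"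
proof (induction u arbitrary: d)
  case Nil then show ?case by simp
next
  case (Cons a u) then show ?case
    by (cases a) (fastforce split: if_splits)+
qed

lemma bal_chk: "balanced w \<Longrightarrow> chk w d = Some d"
proof (induction w arbitrary: d rule: balanced.induct)
  case bal_nil then show ?case by simp
next
  case (bal_wrap w) then show ?case by (simp add: chk_append)
next
  case (bal_app u v) then show ?case by (simp add: chk_append)
qed

lemma bal_ins: "balanced x \<Longrightarrow> x = u @ v \<Longrightarrow> balanced (u @ LP # RP # v)"
proof (induction x arbitrary: u v rule: balanced.induct)
  case bal_nil
  then show ?case using balanced.bal_wrap[OF balanced.bal_nil] by simp
next
  case (bal_wrap w)
  have base: "balanced [LP, RP]" using balanced.bal_wrap[OF balanced.bal_nil] by simp
  show ?case
  proof (cases "u = []")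
    case True
    then show ?thesis using balanced.bal_app[OF base balanced.bal_wrap[OF bal_wrap.hyps]] bal_wrap.prems by simp
  next
    case False
    show ?thesis
    proof (cases "v = []")
      case True
      then show ?thesis using balanced.bal_app[OF balanced.bal_wrap[OF bal_wrap.hyps] base] bal_wrap.prems by simp
    next
      case False2: False
      obtain u' where u: "u = LP # u'" using \<open>u \<noteq> []\<close> bal_wrap.prems by (cases u) auto
      obtain v' where v: "v = v' @ [RP]" using False2 bal_wrap.prems
        by (metis append_butlast_last_id append_is_Nil_conv last_ConsR last_appendR last_snoc list.distinct(1))
      have "w = u' @ v'" using bal_wrap.prems u v by simp
      then have "balanced (u' @ LP # RP # v')" using bal_wrap.IH by blast
      then show ?thesis using balanced.bal_wrap u v by fastforce
    qed
  qed
next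
  case (bal_app a b)
  from bal_app.prems have "(\<exists>s. u = a @ s \<and> b = s @ v) \<or> (\<exists>s. a = u @ s \<and> v = s @ b)"
    by (simp add: append_eq_append_conv2) (metis append_eq_append_conv2)
  then show ?case
  proof
    assume "\<exists>s. u = a @ s \<and> b = s @ v"
    then obtain s where s: "u = a @ s" "b = s @ v" by blast
    then have "balanced (s @ LP # RP # v)" using bal_app.IH(2) by blast
    then show ?thesis using balanced.bal_app[OF bal_app.hyps(1)] s by fastforce
  next
    assume "\<exists>s. a = u @ s \<and> v = s @ b"
    then obtain s where s: "a = u @ s" "v = s @ b" by blast
    then have "balanced (u @ LP # RP # s)" using bal_app.IH(1) by blast
    then show ?thesis using balanced.bal_app[OF _ bal_app.hyps(2)] s by fastforce
  qed
qed

lemma chk_bal: "chk w d = Some 0 \<Longrightarrow> balanced (replicate d LP @ w)"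
proof (induction w arbitrary: d)
  case Nil then show ?case by (simp add: balanced.bal_nil split: if_splits)
next
  case (Cons a w)
  show ?case
  proof (cases a)
    case LP
    then show ?thesis using Cons.IH[of "Suc d"] Cons.prems by (simp add: replicate_app_Cons_same)
  next
    case RP
    then have d: "d \<noteq> 0" "chk w (d - 1) = Some 0" using Cons.prems by (auto split: if_splits)
    then have "balanced (replicate (d - 1) LP @ w)" using Cons.IH by blast
    then have "balanced (replicate (d - 1) LP @ LP # RP # w)" using bal_ins by blast
    moreover have "replicate d LP = replicate (d - 1) LP @ [LP]" using d(1)
      by (metis Suc_diff_1 not_gr_zero replicate_Suc replicate_append_same)
    ultimately show ?thesis using RP by simp
  qed
qed

lemma Lbal_iff: "w \<in> L_bal \<longleftrightarrow> chk w 0 = Some 0"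
  using bal_chk chk_bal[of w 0] by (auto simp: L_bal_def)



definition tr :: "nat \<Rightarrow> paren tsym \<Rightarrow> bool \<Rightarrow> nat \<times> hmove \<times> dmove \<times> act" where
  "tr q s b = (if q = 0 then (1, HRight, DStay, Toggle0)
     else if q = 1 then
       (case s of Sym LP \<Rightarrow> (1, HRight, DUp, NoAct)
        | Sym RP \<Rightarrow> (if b then (1, HRight, DDown, NoAct) else (3, HStay, DStay, NoAct))
        | REnd \<Rightarrow> (if b then (3, HStay, DStay, NoAct) else (2, HStay, DStay, NoAct))
        | LEnd \<Rightarrow> (3, HStay, DStay, NoAct))
     else (q, HStay, DStay, NoAct))"

definition Mb :: "paren oia" where
  "Mb = \<lparr>states = {0,1,2,3}, start = 0, accs = {2}, rejs = {3}, trans = tr,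
         wavelength = 1, amp = 1, det0 = (2, 1), kbound = 1\<rparr>"

definition S0 :: "nat \<Rightarrow> src" where "S0 = (\<lambda>_. Off)(0 := On0)"

definition cfgq :: "nat \<Rightarrow> nat \<Rightarrow> nat \<Rightarrow> config" where
  "cfgq q h d = \<lparr>cstate = q, chead = h, cdet = (2, Suc d), csrc = S0\<rparr>"

lemma wf_Mb: "wf_oia Mb"
  by (auto simp: wf_oia_def Mb_def tr_def split: tsym.splits paren.splits)

lemma out_cfg: "det_output Mb n (cfgq q h d) \<longleftrightarrow> d \<ge> 1"
proof -
  let ?K = "Suc d"
  have r: "srcdist (2, ?K) 0 = sqrt (1 + (real ?K / 2)\<^sup>2)"
    by (simp add: srcdist_def)
  have rpos: "srcdist (2, ?K) 0 > 0" unfolding r by (simp add: add_pos_nonneg)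
  have vis: "0 \<in> visible n (2, ?K) \<longleftrightarrow> d \<ge> 1"
    by (simp add: visible_def)
  have set: "{m \<in> visible n (2, ?K). S0 m \<noteq> Off} = (if d \<ge> 1 then {0} else {})"
    using vis by (auto simp: S0_def)
  show ?thesis
  proof (cases "d \<ge> 1")
    case True
    then have "resultant Mb n (2, ?K) S0 = of_real (1 / srcdist (2, ?K) 0) * cis (phase On0 + 2 * pi * srcdist (2, ?K) 0 / 1)"
      unfolding resultant_def set by (simp add: Mb_def S0_def)
    moreover have "\<dots> \<noteq> 0" using rpos by simp
    ultimately show ?thesis using True by (simp add: det_output_def cfgq_def)
  next
    case False
    then have "resultant Mb n (2, ?K) S0 = 0" unfolding resultant_def set by simp
    moreover have "\<not> (\<exists>m\<in>visible n (2, ?K). S0 m \<noteq> Off \<and> srcdist (2, ?K) m = 0)"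
      using set False by auto
    ultimately show ?thesis using False by (simp add: det_output_def cfgq_def)
  qed
qed

lemma tape_sym: "i < length w \<Longrightarrow> tape w (Suc i) = Sym (w ! i)"
  by (simp add: tape_def)
lemma tape_end: "tape w (Suc (length w)) = REnd"
  by (simp add: tape_def)

lemma run_scan: "i \<le> length w \<Longrightarrow> chk (take i w) 0 = Some d \<Longrightarrow> run Mb w (Suc i) = Some (cfgq 1 (Suc i) d)"
proof (induction i arbitrary: d)
  case 0
  then have "d = 0" by simp
  then show ?case
    by (simp add: init_conf_def Mb_def step_def cur_trans_def tr_def cfgq_def S0_def)
next
  case (Suc i)
  have il: "i < length w" using Suc.prems by simp
  have tk: "take (Suc i) w = take i w @ [w ! i]" using il by (simp add: take_Suc_conv_app_nth)
  obtain d' where d': "chk (take i w) 0 = Some d'" "chk [w ! i] d' = Some d"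
    using Suc.prems(2) unfolding tk chk_append by (auto split: option.splits)
  have IH: "run Mb w (Suc i) = Some (cfgq 1 (Suc i) d')" using Suc.IH il d' by simp
  have bd: "d' \<le> i" using chk_bound[OF d'(1)] il by simp
  have out: "det_output Mb (length w) (cfgq 1 (Suc i) d') \<longleftrightarrow> d' \<ge> 1" by (rule out_cfg)
  have ts: "tape w (Suc i) = Sym (w ! i)" using il by (rule tape_sym)
  have S0i: "S0(Suc i := Off) = S0" by (auto simp: S0_def fun_eq_iff)
  show ?case
  proof (cases "w ! i")
    case LP
    then have "d = Suc d'" using d'(2) by simp
    then show ?thesis using IH out ts il bd LP S0i
      by (simp add: step_def cur_trans_def Mb_def tr_def cfgq_def)
  next
    case RP
    then have "d' \<ge> 1" "d = d' - 1" using d'(2) by (auto split: if_splits)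
    then show ?thesis using IH out ts il bd RP S0i
      by (simp add: step_def cur_trans_def Mb_def tr_def cfgq_def)
  qed
qed



lemma run_pre: "i \<le> length w \<Longrightarrow> \<forall>j\<le>i. chk (take j w) 0 \<noteq> None \<Longrightarrow> j \<le> i \<Longrightarrow>
   \<exists>d. run Mb w (Suc j) = Some (cfgq 1 (Suc j) d)"
  using run_scan[of j w] by fastforce

lemma run0: "run Mb w 0 = Some \<lparr>cstate = 0, chead = 0, cdet = (2, 1), csrc = (\<lambda>_. Off)\<rparr>"
  by (simp add: init_conf_def Mb_def)

lemma tr1_noact: "snd (snd (snd (tr (Suc 0) s b))) = NoAct"
  by (simp add: tr_def split: tsym.split paren.split)

lemma moves_le: "moves_at Mb w t \<le> 2"
  by (auto simp: moves_at_def split: option.splits prod.splits)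

lemma final:
  assumes i: "i \<le> length w" and pre: "\<forall>j\<le>i. chk (take j w) 0 \<noteq> None"
    and rq: "run Mb w (Suc (Suc i)) = Some (cfgq q (Suc i) d)" and q: "q = 2 \<or> q = 3"
  shows "halts_at Mb w (Suc (Suc i)) \<and> toggles_ok Mb w (Suc (Suc i)) \<and>
        real (\<Sum>t<Suc (Suc i). moves_at Mb w t) \<le> 4 * (real (length w) + 1) ^ 3"
proof (intro conjI)
  let ?T = "Suc (Suc i)"
  show "halts_at Mb w ?T"
    unfolding halts_at_def
  proof (intro conjI allI impI)
    show "\<exists>c. run Mb w ?T = Some c \<and> halting Mb c"
      using rq q by (auto simp: halting_def Mb_def cfgq_def)
  next
    fix t assume "t < ?T"
    show "\<exists>c. run Mb w t = Some c \<and> \<not> halting Mb c"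
    proof (cases t)
      case 0 then show ?thesis by (simp only: run0) (simp add: halting_def Mb_def)
    next
      case (Suc j)
      then have "j \<le> i" using \<open>t < ?T\<close> by simp
      then obtain d where "run Mb w (Suc j) = Some (cfgq 1 (Suc j) d)" using run_pre i pre by blast
      then show ?thesis using Suc by (simp add: halting_def Mb_def cfgq_def)
    qed
  qed
next
  let ?T = "Suc (Suc i)"
  have "nontransient_starts Mb w ?T m \<subseteq> {0}" for m
  proof
    fix s assume "s \<in> nontransient_starts Mb w ?T m"
    then obtain c where c: "s < ?T" "run Mb w s = Some c" "snd (snd (snd (cur_trans Mb w c))) \<noteq> NoAct"
      by (auto simp: nontransient_starts_def toggled_def)
    show "s \<in> {0}"
    proof (cases s)
      case 0 then show ?thesis by simp
    next
      case (Suc j)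
      then have "j \<le> i" using c(1) by simp
      then obtain d where "run Mb w (Suc j) = Some (cfgq 1 (Suc j) d)" using run_pre i pre by blast
      then have "c = cfgq 1 (Suc j) d" using c(2) Suc by simp
      then have False using c(3)
        by (simp add: cur_trans_def Mb_def cfgq_def tr1_noact)
      then show ?thesis ..
    qed
  qed
  then have "card (nontransient_starts Mb w ?T m) \<le> 1" for m
    using card_mono[of "{0::nat}"] by fastforce
  then show "toggles_ok Mb w ?T" by (simp add: toggles_ok_def Mb_def)
next
  let ?T = "Suc (Suc i)"
  have "(\<Sum>t<?T. moves_at Mb w t) \<le> card {..<?T} * 2"
    using sum_bounded_above[of "{..<?T}" "moves_at Mb w" 2] moves_le by simp
  then have s: "(\<Sum>t<?T. moves_at Mb w t) \<le> 2 * (length w + 2)" using i by simp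
  have "2 * (length w + 2) \<le> 4 * (length w + 1) ^ 3"
  proof -
    have "1 \<le> (length w + 1) ^ 2" by simp
    then have "(length w + 1) * 1 \<le> (length w + 1) * (length w + 1) ^ 2" by (rule mult_left_mono) simp
    then have "length w + 1 \<le> (length w + 1) ^ 3" by (simp add: power_Suc[symmetric] del: power_Suc)
    moreover have "\<And>x m::nat. m + 1 \<le> x \<Longrightarrow> 2 * (m + 2) \<le> 4 * x" by arith
    ultimately show ?thesis by blast
  qed
  with s have "(\<Sum>t<?T. moves_at Mb w t) \<le> 4 * (length w + 1) ^ 3" by linarith
  then have "real (\<Sum>t<?T. moves_at Mb w t) \<le> real (4 * (length w + 1) ^ 3)" by (rule of_nat_mono)
  then show "real (\<Sum>t<?T. moves_at Mb w t) \<le> 4 * (real (length w) + 1) ^ 3" by (simp only: of_nat_mult of_nat_power of_nat_add of_nat_numeral of_nat_1)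
qed

theorem theorem5:
  shows "\<exists>(M :: paren oia) (C :: real). wf_oia M \<and>
           recognizes_in_time M L_bal (\<lambda>n. C * (real n + 1) ^ 3)"
proof (intro exI conjI)
  show "wf_oia Mb" by (rule wf_Mb)
  show "recognizes_in_time Mb L_bal (\<lambda>n. 4 * (real n + 1) ^ 3)"
    unfolding recognizes_in_time_def
  proof
    fix w :: "paren list"
    let ?n = "length w"
    have "\<exists>i d q. i \<le> ?n \<and> (\<forall>j\<le>i. chk (take j w) 0 \<noteq> None) \<and>
            run Mb w (Suc (Suc i)) = Some (cfgq q (Suc i) d) \<and> (q = 2 \<or> q = 3) \<and>
            (w \<in> L_bal \<longleftrightarrow> q = 2 \<and> d = 0)"
    proof (cases "chk w 0")
      case (Some d)
      have pre: "\<forall>j\<le>?n. chk (take j w) 0 \<noteq> None"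
      proof (intro allI impI)
        fix j assume "j \<le> ?n"
        show "chk (take j w) 0 \<noteq> None"
        proof
          assume "chk (take j w) 0 = None"
          then show False using Some chk_append[of "take j w" "drop j w" 0] by simp
        qed
      qed
      have r: "run Mb w (Suc ?n) = Some (cfgq 1 (Suc ?n) d)" using run_scan[of ?n w d] Some by simp
      have out: "det_output Mb ?n (cfgq 1 (Suc ?n) d) \<longleftrightarrow> d \<ge> 1" by (rule out_cfg)
      define q where "q = (if d = 0 then 2 else (3::nat))"
      have rq: "run Mb w (Suc (Suc ?n)) = Some (cfgq q (Suc ?n) d)"
        using r out tape_end[of w]
        by (simp add: step_def cur_trans_def Mb_def tr_def cfgq_def q_def fun_upd_idem)
      have "w \<in> L_bal \<longleftrightarrow> q = 2 \<and> d = 0" using Some by (simp add: Lbal_iff q_def)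
      moreover have "q = 2 \<or> q = 3" by (simp add: q_def)
      ultimately show ?thesis using pre rq by blast
    next
      case None
      define P where "P = (\<lambda>i. chk (take (Suc i) w) 0 = None)"
      have n0: "?n \<noteq> 0" using None by (cases w) auto
      have Pn: "P (?n - 1)" using None n0 by (simp add: P_def)
      define i where "i = (LEAST i. P i)"
      have Pi: "P i" unfolding i_def by (rule LeastI[of P, OF Pn])
      have ile: "i \<le> ?n - 1" unfolding i_def by (rule Least_le[of P, OF Pn])
      then have il: "i < ?n" using n0 by linarith
      have pre: "\<forall>j\<le>i. chk (take j w) 0 \<noteq> None"
      proof (intro allI impI)
        fix j assume "j \<le> i"
        show "chk (take j w) 0 \<noteq> None"
        proof (cases j)
          case 0 then show ?thesis by simp
        next
          case (Suc j')
          then have "j' < i" using \<open>j \<le> i\<close> by simp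
          then have "\<not> P j'" unfolding i_def by (rule not_less_Least)
          then show ?thesis using Suc by (simp add: P_def)
        qed
      qed
      then obtain d where d: "chk (take i w) 0 = Some d" by blast
      have tk: "take (Suc i) w = take i w @ [w ! i]" using il by (simp add: take_Suc_conv_app_nth)
      have "chk [w ! i] d = None" using Pi d unfolding P_def tk chk_append by simp
      then have wi: "w ! i = RP" "d = 0" by (cases "w ! i"; auto split: if_splits)+
      have r: "run Mb w (Suc i) = Some (cfgq 1 (Suc i) d)" using run_scan[of i w d] d il by simp
      have out: "det_output Mb ?n (cfgq 1 (Suc i) d) \<longleftrightarrow> d \<ge> 1" by (rule out_cfg)
      have rq: "run Mb w (Suc (Suc i)) = Some (cfgq 3 (Suc i) d)"
        using r out tape_sym[OF il] wi
        by (simp add: step_def cur_trans_def Mb_def tr_def cfgq_def fun_upd_idem)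
      have "w \<notin> L_bal" using None by (simp add: Lbal_iff)
      then show ?thesis using pre rq il by (intro exI[of _ i] exI[of _ d] exI[of _ 3]) auto
    qed
    then obtain i d q where i: "i \<le> ?n" and pre: "\<forall>j\<le>i. chk (take j w) 0 \<noteq> None"
      and rq: "run Mb w (Suc (Suc i)) = Some (cfgq q (Suc i) d)" and q: "q = 2 \<or> q = 3"
      and L: "w \<in> L_bal \<longleftrightarrow> q = 2 \<and> d = 0" by blast
    have acc: "accepting_conf Mb w (cfgq q (Suc i) d) \<longleftrightarrow> q = 2 \<and> d = 0"
      using out_cfg[of ?n q "Suc i" d] by (auto simp: accepting_conf_def Mb_def cfgq_def)
    show "\<exists>T c. halts_at Mb w T \<and> run Mb w T = Some c \<and> toggles_ok Mb w T \<and>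
        (w \<in> L_bal \<longleftrightarrow> accepting_conf Mb w c) \<and>
        real (\<Sum>t<T. moves_at Mb w t) \<le> 4 * (real (length w) + 1) ^ 3"
      using final[OF i pre rq q] rq L acc by blast
  qed
qed

end
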